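(* Let $n\ge2$. Among sets $K\in\mathcal S_n\setminus\{\emptyset,\mathbb R^n\}$, the unit balls $B(x,1)$, $x\in\mathbb R^n$, are the only ones with no $c$-extremal points.
   Context: $B(x,r)$ is the closed Euclidean ball. For $A\subseteq\mathbb R^n$, $A^c=\bigcap_{x\in A}B(x,1)$ (with $\emptyset^c=\mathbb R^n$), and $\mathrm{conv}_c(A)=A^{cc}$ is its $c$-hull. $\mathcal S_n$ is the class of all sets of the form $\bigcap_{x\in A}B(x,1)$, $A\subseteq\mathbb R^n$. For $K\in\mathcal S_n$, a point $x\in K$ is $c$-extremal for $K$ if whenever $x\in\mathrm{conv}_c(\{y,z\})$ with $y,z\in K$, then $y=x$ or $z=x$. *)

theory Defs
  imports "HOL-Analysis.Analysis"
begin

text \<open>A^c = intersection of closed unit balls centred at points of A (empty intersection = UNIV).\<close>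
definition cdual :: "'a::real_normed_vector set \<Rightarrow> 'a set" where
  "cdual A = (\<Inter>x\<in>A. cball x 1)"

definition chull :: "'a::real_normed_vector set \<Rightarrow> 'a set" where
  "chull A = cdual (cdual A)"

definition cspindle_class :: "'a::real_normed_vector set set" where
  "cspindle_class = {K. \<exists>A. K = cdual A}"

definition c_extremal :: "'a::real_normed_vector set \<Rightarrow> 'a \<Rightarrow> bool" where
  "c_extremal K x \<longleftrightarrow> x \<in> K \<and>
     (\<forall>y\<in>K. \<forall>z\<in>K. x \<in> chull {y, z} \<longrightarrow> y = x \<or> z = x)"

end

theory Submission
  imports Defs
begin

lemma mem_cdual: "x \<in> cdual A \<longleftrightarrow> (\<forall>a\<in>A. dist a x \<le> 1)"
  by (auto simp: cdual_def)

lemma cdual_anti: "A \<subseteq> B \<Longrightarrow> cdual B \<subseteq> cdual A"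
  by (auto simp: cdual_def)

lemma subset_cdd: "A \<subseteq> cdual (cdual A)"
  by (clarsimp simp: mem_cdual) (metis dist_commute)

lemma cdd_eq:
  assumes "K \<in> cspindle_class"
  shows "cdual (cdual K) = K"
proof -
  obtain A where K: "K = cdual A" using assms by (auto simp: cspindle_class_def)
  have "cdual (cdual (cdual A)) \<subseteq> cdual A" by (rule cdual_anti[OF subset_cdd])
  then show ?thesis using subset_cdd[of K] K by auto
qed

lemma norm_add_sq: "norm (x + y)^2 = norm x^2 + 2 * inner x y + norm (y::'a::real_inner)^2"
  by (simp add: power2_norm_eq_inner inner_add inner_commute)

lemma norm_diff_sq: "norm (x - y)^2 = norm x^2 - 2 * inner x y + norm (y::'a::real_inner)^2"
  by (simp add: power2_norm_eq_inner inner_diff inner_commute)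

lemma closed_cdual: "closed (cdual A)"
  unfolding cdual_def by (auto intro: closed_INT)

lemma ball_no_extremal:
  fixes x :: "'a::euclidean_space"
  assumes "2 \<le> DIM('a)" "p \<in> cball x 1"
  shows "\<not> c_extremal (cball x 1) p"
proof
  assume ext: "c_extremal (cball x 1) p"
  obtain v0 where v0: "v0 \<noteq> 0" "orthogonal (p - x) v0"
    using orthogonal_to_vector_exists[OF assms(1)] by blast
  define v where "v = v0 /\<^sub>R norm v0"
  have nv: "norm v = 1" using v0 by (simp add: v_def)
  have ov: "inner (p - x) v = 0" using v0 by (simp add: v_def orthogonal_def)
  have vv: "inner v v = 1" using nv by (simp add: norm_eq_sqrt_inner)
  have y: "x + v \<in> cball x 1" and z: "x - v \<in> cball x 1" using nv by (auto simp: dist_norm)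
  have ny: "x + v \<noteq> p"
  proof
    assume "x + v = p" then have "p - x = v" by auto
    with ov vv show False by simp
  qed
  have nz: "x - v \<noteq> p"
  proof
    assume "x - v = p" then have "p - x = - v" by auto
    with ov vv show False by simp
  qed
  have "p \<in> chull {x + v, x - v}"
    unfolding chull_def mem_cdual
  proof
    fix w assume w: "w \<in> cdual {x + v, x - v}"
    then have d1: "norm (w - x - v) \<le> 1" and d2: "norm (w - x + v) \<le> 1"
      by (auto simp: mem_cdual dist_norm norm_minus_commute algebra_simps)
    have "norm (w - x - v)^2 + norm (w - x + v)^2 = 2 * norm (w - x)^2 + 2"
      using vv by (simp add: power2_norm_eq_inner inner_diff inner_add algebra_simps inner_commute)
    moreover have "norm (w - x - v)^2 \<le> 1" "norm (w - x + v)^2 \<le> 1"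
      using d1 d2 by (simp_all add: power_le_one)
    ultimately have "norm (w - x)^2 \<le> 0" by linarith
    then have "w = x" by simp
    then show "dist w p \<le> 1" using assms(2) by (simp add: dist_commute)
  qed
  with ext y z ny nz show False unfolding c_extremal_def by blast
qed

lemma extremal_exists:
  fixes K :: "'a::euclidean_space set"
  assumes "K \<in> cspindle_class" "K \<noteq> {}" "a \<in> cdual K" "b \<in> cdual K" "a \<noteq> b"
  shows "\<exists>p. c_extremal K p"
proof -
  define q where "q = midpoint a b"
  have Ka: "K \<subseteq> cball a 1" and Kb: "K \<subseteq> cball b 1"
    using assms(3,4) unfolding mem_cdual by (metis dist_commute mem_cball subsetI)+
  obtain A where KA: "K = cdual A" using assms(1) by (auto simp: cspindle_class_def)
  have "compact K" using Ka closed_cdual[of A] KA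
    by (metis bounded_cball bounded_subset compact_eq_bounded_closed)
  then obtain p where pK: "p \<in> K" and pmax: "\<And>y. y \<in> K \<Longrightarrow> dist q y \<le> dist q p"
    using distance_attains_sup[of K q] assms(2) by blast
  define R where "R = dist q p"
  have R1: "R < 1"
  proof -
    have "norm (p - a) \<le> 1" "norm (p - b) \<le> 1" using pK Ka Kb by (auto simp: dist_norm norm_minus_commute)
    then have h1: "norm (p - a)^2 \<le> 1" and h2: "norm (p - b)^2 \<le> 1" by (simp_all add: power_le_one)
    have pl: "norm ((p - a) + (p - b))^2 + norm ((p-a) - (p-b))^2 = 2 * norm (p - a)^2 + 2 * norm (p-b)^2"
      by (simp add: power2_norm_eq_inner inner_diff inner_add algebra_simps inner_commute)
    have e1: "(p - a) + (p - b) = 2 *\<^sub>R (p - q)" by (simp add: q_def midpoint_def algebra_simps scaleR_2)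
    have e2: "norm ((p - a) + (p - b))^2 = 4 * norm (p - q)^2"
      unfolding e1 by (simp add: power_mult_distrib)
    have e3: "norm ((p-a) - (p-b))^2 > 0" using assms(5) by simp
    have "norm (p - q)^2 < 1" using pl e2 e3 h1 h2 by linarith
    then have "\<not> 1 \<le> norm (p - q)" using one_le_power[of "norm (p - q)" 2] by linarith
    then show ?thesis unfolding R_def dist_norm by (simp add: norm_minus_commute)
  qed
  have "c_extremal K p"
    unfolding c_extremal_def
  proof (intro conjI pK ballI impI)
    fix y z assume yK: "y \<in> K" and zK: "z \<in> K" and ph: "p \<in> chull {y, z}"
    show "y = p \<or> z = p"
    proof (rule ccontr)
      assume nyz: "\<not> (y = p \<or> z = p)"
      show False
      proof (cases "R = 0")
        case True
        then have "dist q y \<le> 0" using pmax[OF yK] R_def by simp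
        then have "y = q" by simp
        moreover have "p = q" using True R_def by simp
        ultimately show False using nyz by simp
      next
        case False
        then have Rpos: "R > 0" using R_def by simp
        define u where "u = (1 / R) *\<^sub>R (p - q)"
        have nu: "norm u = 1" using Rpos by (simp add: u_def R_def dist_norm norm_minus_commute)
        have pu: "p - q = R *\<^sub>R u" using Rpos by (simp add: u_def)
        define c where "c = q - (1 - R) *\<^sub>R u"
        have strict: "dist c w < 1" if wK: "w \<in> K" and wp: "w \<noteq> p" for w
        proof -
          have wq: "norm (w - q) \<le> R" using pmax[OF wK] R_def by (simp add: dist_norm norm_minus_commute)
          have iu: "inner (w - q) u \<le> R"
            using norm_cauchy_schwarz[of "w - q" u] nu wq by simp
          have eq: "norm (w - c)^2 = norm (w - q)^2 + 2 * (1 - R) * inner (w - q) u + (1 - R)^2"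
          proof -
            have "w - c = (w - q) + (1 - R) *\<^sub>R u" by (simp add: c_def algebra_simps)
            then have "norm (w - c)^2 = norm ((w - q) + (1 - R) *\<^sub>R u)^2" by (simp only:)
            also have "\<dots> = norm (w - q)^2 + 2 * ((1 - R) * inner (w - q) u) + (1 - R)^2"
              unfolding norm_add_sq using nu by (simp add: power_mult_distrib)
            finally show ?thesis by simp
          qed
          have wq2: "norm (w - q)^2 \<le> R^2" using wq by (simp add: power_mono)
          have "norm (w - c)^2 < 1"
          proof (rule ccontr)
            assume "\<not> norm (w - c)^2 < 1"
            then have ge: "norm (w - c)^2 \<ge> 1" by simp
            have m: "(1 - R) * inner (w - q) u \<le> (1 - R) * R"
              using iu R1 by (intro mult_left_mono) auto
            have one: "R^2 + 2 * (1 - R) * R + (1 - R)^2 = 1" by (simp add: power2_eq_square algebra_simps)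
            have n1: "norm (w - q)^2 = R^2" and m1: "(1 - R) * inner (w - q) u = (1 - R) * R"
              using ge eq wq2 m one by linarith+
            have i1: "inner (w - q) u = R" using m1 R1 by simp
            have "norm (w - q - R *\<^sub>R u)^2 = norm (w - q)^2 - 2 * R * inner (w - q) u + R^2"
              using nu by (simp add: norm_diff_sq power_mult_distrib)
            also have "\<dots> = 0" using i1 n1 by (simp add: power2_eq_square)
            finally have "w = q + R *\<^sub>R u" by (simp add: algebra_simps)
            then have "w = p" using pu by (simp add: algebra_simps)
            with wp show False by simp
          qed
          then show ?thesis by (simp add: dist_norm norm_minus_commute power_less_one_iff)
        qed
        have cy: "dist c y < 1" and cz: "dist c z < 1" using strict yK zK nyz by auto
        define e where "e = min (1 - dist c y) (1 - dist c z)"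
        have epos: "e > 0" using cy cz by (simp add: e_def)
        define c' where "c' = c - e *\<^sub>R u"
        have "dist c' y \<le> dist c' c + dist c y" by (rule dist_triangle)
        moreover have "dist c' c = e" using nu epos by (simp add: c'_def dist_norm)
        ultimately have c'y: "dist c' y \<le> 1" by (simp add: e_def)
        have "dist c' z \<le> dist c' c + dist c z" by (rule dist_triangle)
        with \<open>dist c' c = e\<close> have c'z: "dist c' z \<le> 1" by (simp add: e_def)
        have "c' \<in> cdual {y, z}" using c'y c'z by (simp add: mem_cdual dist_commute)
        moreover have "p \<in> cdual (cdual {y, z})" using ph by (simp add: chull_def)
        ultimately have "dist c' p \<le> 1" by (meson mem_cdual)
        moreover have "p - c' = (1 + e) *\<^sub>R u"
          using pu by (simp add: c'_def c_def algebra_simps)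
        then have "dist c' p = 1 + e" using nu epos by (metis dist_commute dist_norm norm_scaleR abs_of_pos add_pos_pos zero_less_one mult_cancel_left1 mult.comm_neutral)
        ultimately show False using epos by simp
      qed
    qed
  qed
  then show ?thesis by blast
qed

theorem theorem4p5:
  fixes K :: "(real ^ 'n) set"
  assumes "CARD('n) \<ge> 2"
    and "K \<in> cspindle_class"
    and "K \<noteq> {}"
    and "K \<noteq> UNIV"
  shows "(\<not> (\<exists>x. c_extremal K x)) \<longleftrightarrow> (\<exists>x. K = cball x 1)"
proof
  assume noext: "\<not> (\<exists>x. c_extremal K x)"
  show "\<exists>x. K = cball x 1"
  proof (rule ccontr)
    assume nb: "\<not> (\<exists>x. K = cball x 1)"
    obtain A where KA: "K = cdual A" using assms(2) by (auto simp: cspindle_class_def)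
    have "A \<noteq> {}"
    proof
      assume "A = {}" then have "K = UNIV" using KA by (simp add: cdual_def)
      with assms(4) show False by simp
    qed
    then obtain a where aA: "a \<in> A" by blast
    have aK: "a \<in> cdual K" using aA subset_cdd[of A] KA by (simp add: subset_iff)
    have "\<exists>b\<in>cdual K. b \<noteq> a"
    proof (rule ccontr)
      assume "\<not> (\<exists>b\<in>cdual K. b \<noteq> a)"
      then have "cdual K = {a}" using aK by blast
      then have "K = cdual {a}" using cdd_eq[OF assms(2)] by metis
      then have "K = cball a 1" by (simp add: cdual_def)
      with nb show False by blast
    qed
    then obtain b where bK: "b \<in> cdual K" and ba: "b \<noteq> a" by blast
    have "\<exists>p. c_extremal K p" using extremal_exists[OF assms(2,3) aK bK] ba by simp
    with noext show False by simp
  qed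
next
  assume "\<exists>x. K = cball x 1"
  then obtain x where Kx: "K = cball x 1" by blast
  have d: "2 \<le> DIM(real ^ 'n)" using assms(1) by simp
  show "\<not> (\<exists>x. c_extremal K x)"
  proof
    assume "\<exists>p. c_extremal K p"
    then obtain p where "c_extremal K p" by blast
    moreover then have "p \<in> cball x 1" using Kx by (simp add: c_extremal_def)
    ultimately show False using ball_no_extremal[OF d, of p x] Kx by simp
  qed
qed

end
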